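(* Let $\mathbf{k}$ be a commutative ring, $n\ge0$, $\mathcal{A}=\mathbf{k}[S_n]$. Fix $\alpha,\beta\in\operatorname{Comp}_n$ and let $\eta_\beta(\alpha)$ be the number of functions $f:[\ell(\beta)]\to[\ell(\alpha)]$ such that for every $j\in[\ell(\alpha)]$ one has $\alpha_j=\sum_{i\in f^{-1}(j)}\beta_i$. Let $Q_\beta:=\sum_{\alpha'\in\operatorname{Comp}_n,\ \alpha'\prec\beta}\mathcal{R}_{\alpha'}$. Then left multiplication by $\mathbf{B}_\alpha$ acts on the quotient $\mathcal{R}_\beta/Q_\beta$ as multiplication by the scalar $\eta_\beta(\alpha)$.
   Context: $S_n$ is the symmetric group on $[n]=\{1,\dots,n\}$, with product $(uw)(i)=u(w(i))$. For $w\in S_n$, $\operatorname{Des}(w)=\{i\in[n-1]: w(i)>w(i+1)\}$. For $I\subseteq[n-1]$, $\mathbf{B}_I=\sum_{w\in S_n,\ \operatorname{Des}(w)\subseteq I} w\in\mathcal{A}$. A composition $\alpha=(\alpha_1,\dots,\alpha_p)$ of $n$ is a finite sequence of positive integers with sum $n$; its length is $\ell(\alpha)=p$; $\operatorname{Comp}_n$ is the set of these. $\operatorname{Set}(\alpha)=\{\alpha_1,\alpha_1+\alpha_2,\dots,\alpha_1+\cdots+\alpha_{p-1}\}$ and $\mathbf{B}_\alpha:=\mathbf{B}_{\operatorname{Set}(\alpha)}$. For compositions $\alpha=(\alpha_1,\dots,\alpha_m)$, $\beta=(\beta_1,\dots,\beta_p)$ of $n$, $\alpha\preceq\beta$ means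 $\alpha$ can be split into $p$ contiguous subsequences whose $j$-th one sums to $\beta_j$; $\alpha\prec\beta$ means $\alpha\preceq\beta$ and $\alpha\ne\beta$. $\mathcal{R}_\beta:=\mathbf{B}_\beta\mathcal{A}$. *)

theory Defs
  imports "HOL-Combinatorics.Permutations" "HOL-Library.FuncSet"
begin

definition Sn :: "nat \<Rightarrow> (nat \<Rightarrow> nat) set" where
  "Sn n = {w. w permutes {1..n}}"

definition alg_elem :: "nat \<Rightarrow> ((nat \<Rightarrow> nat) \<Rightarrow> 'k::comm_ring_1) \<Rightarrow> bool" where
  "alg_elem n a \<longleftrightarrow> (\<forall>w. w \<notin> Sn n \<longrightarrow> a w = 0)"

text \<open>Product in k[S_n]; (uv)(i) = u(v(i)), i.e. the product of u and v is u o v.\<close>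
definition amult :: "nat \<Rightarrow> ((nat \<Rightarrow> nat) \<Rightarrow> 'k::comm_ring_1) \<Rightarrow> ((nat \<Rightarrow> nat) \<Rightarrow> 'k) \<Rightarrow> ((nat \<Rightarrow> nat) \<Rightarrow> 'k)" where
  "amult n a b = (\<lambda>w. \<Sum>u\<in>Sn n. \<Sum>v\<in>Sn n. if u \<circ> v = w then a u * b v else 0)"

definition Des :: "nat \<Rightarrow> (nat \<Rightarrow> nat) \<Rightarrow> nat set" where
  "Des n w = {i \<in> {1..<n}. w i > w (Suc i)}"

definition BI :: "nat \<Rightarrow> nat set \<Rightarrow> ((nat \<Rightarrow> nat) \<Rightarrow> 'k::comm_ring_1)" where
  "BI n I = (\<lambda>w. if w \<in> Sn n \<and> Des n w \<subseteq> I then 1 else 0)"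

definition is_comp :: "nat \<Rightarrow> nat list \<Rightarrow> bool" where
  "is_comp n \<alpha> \<longleftrightarrow> (\<forall>x\<in>set \<alpha>. 0 < x) \<and> sum_list \<alpha> = n"

definition comp_set :: "nat list \<Rightarrow> nat set" where
  "comp_set \<alpha> = {sum_list (take k \<alpha>) | k. 1 \<le> k \<and> k < length \<alpha>}"

definition Bc :: "nat \<Rightarrow> nat list \<Rightarrow> ((nat \<Rightarrow> nat) \<Rightarrow> 'k::comm_ring_1)" where
  "Bc n \<alpha> = BI n (comp_set \<alpha>)"

definition refines :: "nat list \<Rightarrow> nat list \<Rightarrow> bool" where
  "refines \<alpha> \<beta> \<longleftrightarrow> (\<exists>xss. concat xss = \<alpha> \<and> (\<forall>xs\<in>set xss. xs \<noteq> []) \<and> map sum_list xss = \<beta>)"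

definition strictly_refines :: "nat list \<Rightarrow> nat list \<Rightarrow> bool" where
  "strictly_refines \<alpha> \<beta> \<longleftrightarrow> refines \<alpha> \<beta> \<and> \<alpha> \<noteq> \<beta>"

text \<open>eta_beta(alpha), with 0-based indices.\<close>
definition eta :: "nat list \<Rightarrow> nat list \<Rightarrow> nat" where
  "eta \<beta> \<alpha> = card {f \<in> {0..<length \<beta>} \<rightarrow>\<^sub>E {0..<length \<alpha>}.
      \<forall>j<length \<alpha>. \<alpha> ! j = (\<Sum>i\<in>{i. i < length \<beta> \<and> f i = j}. \<beta> ! i)}"

end

theory Submission
  imports Defs
begin


lemma Sn_finite: "finite (Sn n)"
  unfolding Sn_def by (simp add: finite_permutations)

lemma Sn_comp: "u \<in> Sn n \<Longrightarrow> v \<in> Sn n \<Longrightarrow> u \<circ> v \<in> Sn n"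
  unfolding Sn_def by (simp add: permutes_compose)

lemma delta_aux:
  assumes "p \<in> Sn n"
  shows "(\<Sum>s\<in>Sn n. if p = s \<and> Q s then F else (0::'k::comm_ring_1)) = (if Q p then F else 0)"
proof -
  have "(\<Sum>s\<in>Sn n. if p = s \<and> Q s then F else (0::'k)) = (\<Sum>s\<in>Sn n. if p = s then (if Q s then F else 0) else 0)"
    by (rule sum.cong) auto
  also have "\<dots> = (if Q p then F else 0)" using assms Sn_finite by (simp add: sum.delta)
  finally show ?thesis .
qed

lemma ifz_mult1: "(if P then a else 0) * (b::'k::comm_ring_1) = (if P then a * b else 0)" by simp
lemma ifz_mult2: "(b::'k::comm_ring_1) * (if P then a else 0) = (if P then b * a else 0)" by simp
lemma ifz_sum: "(if P then (\<Sum>g\<in>G. h g) else (0::'k::comm_ring_1)) = (\<Sum>g\<in>G. if P then h g else 0)" by simp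

lemma swap4a: "(\<Sum>s\<in>A. \<Sum>t\<in>B. \<Sum>u\<in>C. \<Sum>v\<in>D. F s t u v) = (\<Sum>t\<in>B. \<Sum>u\<in>C. \<Sum>v\<in>D. \<Sum>s\<in>A. F s t u v)"
proof -
  have "(\<Sum>s\<in>A. \<Sum>t\<in>B. \<Sum>u\<in>C. \<Sum>v\<in>D. F s t u v) = (\<Sum>t\<in>B. \<Sum>s\<in>A. \<Sum>u\<in>C. \<Sum>v\<in>D. F s t u v)"
    by (rule sum.swap)
  also have "\<dots> = (\<Sum>t\<in>B. \<Sum>u\<in>C. \<Sum>s\<in>A. \<Sum>v\<in>D. F s t u v)"
    by (rule sum.cong[OF refl], rule sum.swap)
  also have "\<dots> = (\<Sum>t\<in>B. \<Sum>u\<in>C. \<Sum>v\<in>D. \<Sum>s\<in>A. F s t u v)"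
    by (rule sum.cong[OF refl], rule sum.cong[OF refl], rule sum.swap)
  finally show ?thesis .
qed

lemma swap3a: "(\<Sum>s\<in>A. \<Sum>t\<in>B. \<Sum>u\<in>C. F s t u) = (\<Sum>t\<in>B. \<Sum>u\<in>C. \<Sum>s\<in>A. F s t u)"
proof -
  have "(\<Sum>s\<in>A. \<Sum>t\<in>B. \<Sum>u\<in>C. F s t u) = (\<Sum>t\<in>B. \<Sum>s\<in>A. \<Sum>u\<in>C. F s t u)"
    by (rule sum.swap)
  also have "\<dots> = (\<Sum>t\<in>B. \<Sum>u\<in>C. \<Sum>s\<in>A. F s t u)"
    by (rule sum.cong[OF refl], rule sum.swap)
  finally show ?thesis .
qed

lemma amult_left:
  "amult n (amult n x y) z w =
   (\<Sum>u\<in>Sn n. \<Sum>v\<in>Sn n. \<Sum>t\<in>Sn n. if u \<circ> v \<circ> t = w then x u * y v * z t else 0)"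
proof -
  have "amult n (amult n x y) z w =
    (\<Sum>s\<in>Sn n. \<Sum>t\<in>Sn n. \<Sum>u\<in>Sn n. \<Sum>v\<in>Sn n.
        if u \<circ> v = s \<and> s \<circ> t = w then x u * y v * z t else 0)"
    unfolding amult_def
    by (intro sum.cong refl) (auto simp add: sum_distrib_right ifz_mult1 intro!: sum.cong)
  also have "\<dots> = (\<Sum>t\<in>Sn n. \<Sum>u\<in>Sn n. \<Sum>v\<in>Sn n. \<Sum>s\<in>Sn n.
        if u \<circ> v = s \<and> s \<circ> t = w then x u * y v * z t else 0)"
    by (rule swap4a)
  also have "\<dots> = (\<Sum>t\<in>Sn n. \<Sum>u\<in>Sn n. \<Sum>v\<in>Sn n. if u \<circ> v \<circ> t = w then x u * y v * z t else 0)"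
    by (intro sum.cong refl, subst delta_aux) (auto simp: Sn_comp)
  also have "\<dots> = (\<Sum>u\<in>Sn n. \<Sum>v\<in>Sn n. \<Sum>t\<in>Sn n. if u \<circ> v \<circ> t = w then x u * y v * z t else 0)"
    by (rule swap3a)
  finally show ?thesis .
qed

lemma amult_right:
  "amult n x (amult n y z) w =
   (\<Sum>u\<in>Sn n. \<Sum>v\<in>Sn n. \<Sum>t\<in>Sn n. if u \<circ> v \<circ> t = w then x u * y v * z t else 0)"
proof -
  have "amult n x (amult n y z) w =
    (\<Sum>u\<in>Sn n. \<Sum>s\<in>Sn n. \<Sum>v\<in>Sn n. \<Sum>t\<in>Sn n.
        if v \<circ> t = s \<and> u \<circ> s = w then x u * y v * z t else 0)"
    unfolding amult_def
    by (intro sum.cong refl) (auto simp add: sum_distrib_left ifz_mult2 mult.assoc intro!: sum.cong)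
  also have "\<dots> = (\<Sum>u\<in>Sn n. \<Sum>v\<in>Sn n. \<Sum>t\<in>Sn n. \<Sum>s\<in>Sn n.
        if v \<circ> t = s \<and> u \<circ> s = w then x u * y v * z t else 0)"
    by (rule sum.cong[OF refl], rule swap3a)
  also have "\<dots> = (\<Sum>u\<in>Sn n. \<Sum>v\<in>Sn n. \<Sum>t\<in>Sn n. if u \<circ> v \<circ> t = w then x u * y v * z t else 0)"
    by (intro sum.cong refl, subst delta_aux) (auto simp: Sn_comp o_assoc)
  finally show ?thesis .
qed

lemma amult_assoc: "amult n (amult n x y) z = amult n x (amult n y z)"
  by (rule ext) (simp add: amult_left amult_right)

lemma amult_sum_left:
  "finite G \<Longrightarrow> amult n (\<lambda>w. \<Sum>g\<in>G. f g w) z w = (\<Sum>g\<in>G. amult n (f g) z w)"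
  unfolding amult_def
  apply (simp add: swap3a[of _ "Sn n" "Sn n" G])
  apply (intro sum.cong refl)
  by (simp add: sum_distrib_right)

lemma amult_scal_right:
  "amult n x (\<lambda>w. c * z w) w = c * amult n x z w"
  unfolding amult_def
  by (simp add: sum_distrib_left if_distrib mult.left_commute cong: if_cong)



definition Xm :: "nat \<Rightarrow> (nat \<Rightarrow> 'b) \<Rightarrow> (nat \<Rightarrow> nat) set" where
  "Xm n c = {u \<in> Sn n. \<forall>i j. 1 \<le> i \<longrightarrow> i < j \<longrightarrow> j \<le> n \<longrightarrow> c i = c j \<longrightarrow> u i < u j}"

lemma Sn_in: "u \<in> Sn n \<Longrightarrow> x \<in> {1..n} \<Longrightarrow> u x \<in> {1..n}"
proof -
  assume "u \<in> Sn n" "x \<in> {1..n}"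
  then have "u permutes {1..n}" by (simp add: Sn_def)
  then show "u x \<in> {1..n}" using \<open>x \<in> {1..n}\<close> by (simp only: permutes_in_image)
qed

lemma Sn_out: "u \<in> Sn n \<Longrightarrow> x \<notin> {1..n} \<Longrightarrow> u x = x"
  unfolding Sn_def by (simp add: permutes_not_in)

lemma Sn_inj: "u \<in> Sn n \<Longrightarrow> inj u"
  unfolding Sn_def by (simp add: permutes_inj)

lemma smono_unique:
  fixes f g :: "nat \<Rightarrow> nat"
  assumes fin: "finite A"
    and f: "\<forall>x\<in>A. \<forall>y\<in>A. x < y \<longrightarrow> f x < f y"
    and g: "\<forall>x\<in>A. \<forall>y\<in>A. x < y \<longrightarrow> g x < g y"
    and im: "f ` A = g ` A" and x: "x \<in> A"
  shows "f x = g x"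
proof -
  have rk: "card {z\<in>h ` A. z < h x} = card {y\<in>A. y < x}"
    if h: "\<forall>x\<in>A. \<forall>y\<in>A. x < y \<longrightarrow> h x < h y" for h :: "nat \<Rightarrow> nat"
  proof -
    have inj: "inj_on h A"
    proof (rule inj_onI)
      fix p q assume "p \<in> A" "q \<in> A" "h p = h q"
      then show "p = q" using h by (metis less_irrefl nat_neq_iff)
    qed
    have "{z\<in>h ` A. z < h x} = h ` {y\<in>A. y < x}"
    proof
      show "{z \<in> h ` A. z < h x} \<subseteq> h ` {y \<in> A. y < x}"
      proof
        fix z assume "z \<in> {z \<in> h ` A. z < h x}"
        then obtain y where y: "y \<in> A" "z = h y" "h y < h x" by auto
        have "y < x"
        proof (rule ccontr)
          assume "\<not> y < x"
          then have "x \<le> y" by simp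
          then have "h x \<le> h y" using h x y(1) by (metis le_neq_implies_less less_imp_le order_refl)
          then show False using y(3) by simp
        qed
        then show "z \<in> h ` {y \<in> A. y < x}" using y by auto
      qed
      show "h ` {y \<in> A. y < x} \<subseteq> {z \<in> h ` A. z < h x}"
        using h x by blast
    qed
    then show ?thesis using inj by (simp add: card_image inj_on_subset)
  qed
  define B where "B = f ` A"
  have r1: "card {z\<in>B. z < f x} = card {y\<in>A. y < x}" using rk[OF f] B_def by simp
  have r2: "card {z\<in>B. z < g x} = card {y\<in>A. y < x}" using rk[OF g] B_def im by simp
  have fB: "f x \<in> B" "g x \<in> B" using x im B_def by auto
  have finB: "finite B" using fin B_def by simp
  show ?thesis
  proof (rule ccontr)
    assume "f x \<noteq> g x"
    then consider "f x < g x" | "g x < f x" by linarith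
    then show False
    proof cases
      case 1
      have "{z\<in>B. z < f x} \<subset> {z\<in>B. z < g x}" using 1 fB by auto
      then have "card {z\<in>B. z < f x} < card {z\<in>B. z < g x}"
        using finB by (intro psubset_card_mono) auto
      then show False using r1 r2 by simp
    next
      case 2
      have "{z\<in>B. z < g x} \<subset> {z\<in>B. z < f x}" using 2 fB by auto
      then have "card {z\<in>B. z < g x} < card {z\<in>B. z < f x}"
        using finB by (intro psubset_card_mono) auto
      then show False using r1 r2 by simp
    qed
  qed
qed

lemma rank_perm:
  fixes key :: "nat \<Rightarrow> nat"
  assumes inj: "inj_on key {1..n}"
  defines "r \<equiv> (\<lambda>z. if z \<in> {1..n} then card {z'\<in>{1..n}. key z' \<le> key z} else z)"
  shows "r permutes {1..n}"
    and "\<And>z z'. z \<in> {1..n} \<Longrightarrow> z' \<in> {1..n} \<Longrightarrow> key z < key z' \<Longrightarrow> r z < r z'"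
proof -
  show mono: "r z < r z'" if z: "z \<in> {1..n}" and z': "z' \<in> {1..n}" and lt: "key z < key z'" for z z'
  proof -
    have "{y\<in>{1..n}. key y \<le> key z} \<subseteq> {y\<in>{1..n}. key y \<le> key z'}"
      using lt by auto
    moreover have "z' \<in> {y\<in>{1..n}. key y \<le> key z'}" "z' \<notin> {y\<in>{1..n}. key y \<le> key z}"
      using z' lt by auto
    ultimately have "{y\<in>{1..n}. key y \<le> key z} \<subset> {y\<in>{1..n}. key y \<le> key z'}"
      by blast
    then have "card {y\<in>{1..n}. key y \<le> key z} < card {y\<in>{1..n}. key y \<le> key z'}"
      by (intro psubset_card_mono) auto
    then show ?thesis using z z' r_def by simp
  qed
  have into: "r ` {1..n} \<subseteq> {1..n}"
  proof
    fix y assume "y \<in> r ` {1..n}"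
    then obtain z where z: "z \<in> {1..n}" "y = r z" by auto
    have "z \<in> {z'\<in>{1..n}. key z' \<le> key z}" using z by auto
    then have "{z'\<in>{1..n}. key z' \<le> key z} \<noteq> {}" by blast
    then have "card {z'\<in>{1..n}. key z' \<le> key z} \<ge> 1"
      by (simp add: Suc_leI card_gt_0_iff)
    moreover have "card {z'\<in>{1..n}. key z' \<le> key z} \<le> card {1..n}"
      by (rule card_mono) auto
    ultimately show "y \<in> {1..n}" using z r_def by auto
  qed
  have injr: "inj_on r {1..n}"
  proof (rule inj_onI)
    fix x y assume x: "x \<in> {1..n}" and y: "y \<in> {1..n}" and e: "r x = r y"
    show "x = y"
    proof (rule ccontr)
      assume "x \<noteq> y"
      then have "key x \<noteq> key y" using inj x y by (meson inj_on_def)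
      then consider "key x < key y" | "key y < key x" by linarith
      then show False using mono x y e by cases force+
    qed
  qed
  have "r ` {1..n} = {1..n}" using endo_inj_surj[OF _ into injr] by simp
  then have "bij_betw r {1..n} {1..n}" using injr by (simp add: bij_betw_def)
  then show "r permutes {1..n}"
    by (rule bij_imp_permutes) (auto simp: r_def)
qed

lemma downset_eq:
  assumes S: "S \<subseteq> {1..(n::nat)}" and dc: "\<forall>x\<in>S. \<forall>y. 1 \<le> y \<longrightarrow> y \<le> x \<longrightarrow> y \<in> S"
  shows "S = {1..card S}"
proof (cases "S = {}")
  case True then show ?thesis by simp
next
  case False
  have fin: "finite S" using S finite_subset by blast
  define M where "M = Max S"
  have "M \<in> S" using Max_in fin False M_def by blast
  have "S = {1..M}"
  proof
    show "S \<subseteq> {1..M}" using S fin M_def by auto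
    show "{1..M} \<subseteq> S" using dc \<open>M \<in> S\<close> by auto
  qed
  then show ?thesis by simp
qed

lemma fiber_sum:
  "card {x\<in>{1..n}. h x < k} = (\<Sum>j<k. card {x\<in>{1..n::nat}. (h x::nat) = j})"
proof (induction k)
  case 0 then show ?case by simp
next
  case (Suc k)
  have "{x\<in>{1..n}. h x < Suc k} = {x\<in>{1..n}. h x < k} \<union> {x\<in>{1..n}. h x = k}" by auto
  then have "card {x\<in>{1..n}. h x < Suc k} = card {x\<in>{1..n}. h x < k} + card {x\<in>{1..n}. h x = k}"
    by (simp add: card_Un_disjoint disjoint_iff)
  then show ?case using Suc by simp
qed

lemma fiber_interval:
  fixes a :: "nat \<Rightarrow> nat"
  assumes am: "mono a"
  shows "{x\<in>{1..n}. a x = k} =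
    {x. card {x\<in>{1..n}. a x < k} < x \<and> x \<le> card {x\<in>{1..n}. a x < k} + card {x\<in>{1..n}. a x = k}}"
proof -
  define L where "L = card {x\<in>{1..n}. a x < k}"
  define c where "c = card {x\<in>{1..n}. a x = k}"
  have d1: "{x\<in>{1..n}. a x < k} = {1..L}"
    unfolding L_def
  proof (rule downset_eq[of _ n])
    show "\<forall>x\<in>{x \<in> {1..n}. a x < k}. \<forall>y. 1 \<le> y \<longrightarrow> y \<le> x \<longrightarrow> y \<in> {x \<in> {1..n}. a x < k}"
    proof (intro ballI allI impI)
      fix x y assume x: "x \<in> {x \<in> {1..n}. a x < k}" and y: "1 \<le> y" "y \<le> x"
      have "a y \<le> a x" using am y(2) by (rule monoD)
      then show "y \<in> {x \<in> {1..n}. a x < k}" using x y by auto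
    qed
  qed auto
  have "card {x\<in>{1..n}. a x \<le> k} = L + c"
  proof -
    have "{x\<in>{1..n}. a x \<le> k} = {x\<in>{1..n}. a x < k} \<union> {x\<in>{1..n}. a x = k}" by auto
    then show ?thesis unfolding L_def c_def by (simp add: card_Un_disjoint disjoint_iff)
  qed
  moreover have d2: "{x\<in>{1..n}. a x \<le> k} = {1..card {x\<in>{1..n}. a x \<le> k}}"
  proof (rule downset_eq[of _ n])
    show "\<forall>x\<in>{x \<in> {1..n}. a x \<le> k}. \<forall>y. 1 \<le> y \<longrightarrow> y \<le> x \<longrightarrow> y \<in> {x \<in> {1..n}. a x \<le> k}"
    proof (intro ballI allI impI)
      fix x y assume x: "x \<in> {x \<in> {1..n}. a x \<le> k}" and y: "1 \<le> y" "y \<le> x"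
      have "a y \<le> a x" using am y(2) by (rule monoD)
      then show "y \<in> {x \<in> {1..n}. a x \<le> k}" using x y by auto
    qed
  qed auto
  ultimately have d3: "{x\<in>{1..n}. a x \<le> k} = {1..L+c}" by simp
  have "{x\<in>{1..n}. a x = k} = {x\<in>{1..n}. a x \<le> k} - {x\<in>{1..n}. a x < k}" by auto
  also have "\<dots> = {x. L < x \<and> x \<le> L + c}" using d1 d3 by auto
  finally show ?thesis unfolding L_def c_def .
qed

lemma keyle:
  fixes p q A B n :: nat
  assumes "A \<le> n" "B \<le> n"
  shows "p*(n+1)+A \<le> q*(n+1)+B \<longleftrightarrow> p < q \<or> (p = q \<and> A \<le> B)"
proof (cases "p < q")
  case True
  then have "(p+1)*(n+1) \<le> q*(n+1)" by (intro mult_le_mono1) simp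
  then show ?thesis using True assms by (simp add: algebra_simps)
next
  case False
  show ?thesis
  proof (cases "p = q")
    case True then show ?thesis by simp
  next
    case F2: False
    with False have "q < p" by simp
    then have "(q+1)*(n+1) \<le> p*(n+1)" by (intro mult_le_mono1) simp
    then show ?thesis using False F2 assms by (simp add: algebra_simps)
  qed
qed

lemma keyless:
  fixes p q A B n :: nat
  assumes "A \<le> n" "B \<le> n"
  shows "p*(n+1)+A < q*(n+1)+B \<longleftrightarrow> p < q \<or> (p = q \<and> A < B)"
  using keyle[OF assms(2,1), of q p] by auto



lemma Sn_perm: "u \<in> Sn n \<Longrightarrow> u permutes {1..n}" by (simp add: Sn_def)

lemma Sn_surj: assumes "v \<in> Sn n" "y \<in> {1..n}" shows "\<exists>x\<in>{1..n}. v x = y"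
proof -
  have p: "v permutes {1..n}" using assms Sn_perm by blast
  have "inv v permutes {1..n}" using p permutes_inv by blast
  then have "inv v y \<in> {1..n}" using assms(2) by (simp only: permutes_in_image)
  moreover have "v (inv v y) = y" using p permutes_inverses(1) by fast
  ultimately show ?thesis by blast
qed

lemma key_bij:
  fixes a b w :: "nat \<Rightarrow> nat"
  assumes am: "mono a" and bm: "mono b" and ar: "\<forall>x\<in>{1..n}. a x < m"
  defines "G \<equiv> {g \<in> {1..n} \<rightarrow>\<^sub>E {0..<m}. (\<forall>k. card {x\<in>{1..n}. g x = k} = card {x\<in>{1..n}. a x = k}) \<and>
                 (\<forall>i j. 1 \<le> i \<longrightarrow> i < j \<longrightarrow> j \<le> n \<longrightarrow> b i = b j \<longrightarrow> g i \<le> g j)}"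
  shows "card {(u,v). u \<in> Xm n a \<and> v \<in> Xm n b \<and> u \<circ> v = w} = card {g\<in>G. w \<in> Xm n (\<lambda>x. (b x, g x))}"
proof -
  define D where "D = {(u,v). u \<in> Xm n a \<and> v \<in> Xm n b \<and> u \<circ> v = w}"
  define T where "T = {g\<in>G. w \<in> Xm n (\<lambda>x. (b x, g x))}"
  define F where "F = (\<lambda>(u::nat\<Rightarrow>nat, v::nat\<Rightarrow>nat). restrict (a \<circ> v) {1..n})"
  have img: "F p \<in> T" if p: "p \<in> D" for p
  proof -
    obtain u v where uv: "p = (u,v)" "u \<in> Xm n a" "v \<in> Xm n b" "u \<circ> v = w"
      using p D_def by auto
    have uS: "u \<in> Sn n" and vS: "v \<in> Sn n" using uv Xm_def by auto
    have vin: "\<And>x. x \<in> {1..n} \<Longrightarrow> v x \<in> {1..n}" using vS Sn_in by blast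
    define g where "g = restrict (a \<circ> v) {1..n}"
    have Fp: "F p = g" using uv F_def g_def by simp
    have g1: "g \<in> {1..n} \<rightarrow>\<^sub>E {0..<m}"
      unfolding g_def restrict_PiE_iff
    proof
      fix x assume "x \<in> {1..n}"
      then have "v x \<in> {1..n}" by (rule vin)
      then show "(a \<circ> v) x \<in> {0..<m}" using ar by simp
    qed
    have g2: "card {x\<in>{1..n}. g x = k} = card {x\<in>{1..n}. a x = k}" for k
    proof -
      have e1: "{x\<in>{1..n}. g x = k} = {x\<in>{1..n}. a (v x) = k}" unfolding g_def by auto
      have e2: "v ` {x\<in>{1..n}. a (v x) = k} = {x\<in>{1..n}. a x = k}"
      proof
        show "v ` {x\<in>{1..n}. a (v x) = k} \<subseteq> {x\<in>{1..n}. a x = k}"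
        proof
          fix y assume "y \<in> v ` {x\<in>{1..n}. a (v x) = k}"
          then obtain x where "x \<in> {1..n}" "a (v x) = k" "y = v x" by blast
          then show "y \<in> {x\<in>{1..n}. a x = k}" using vin[of x] by simp
        qed
        show "{x\<in>{1..n}. a x = k} \<subseteq> v ` {x\<in>{1..n}. a (v x) = k}"
        proof
          fix y assume y: "y \<in> {x\<in>{1..n}. a x = k}"
          then obtain x where x: "x \<in> {1..n}" "v x = y" using Sn_surj[OF vS] by blast
          then have "x \<in> {x\<in>{1..n}. a (v x) = k}" using y by simp
          then show "y \<in> v ` {x\<in>{1..n}. a (v x) = k}" using x(2) by (metis image_eqI)
        qed
      qed
      have e3: "inj_on v {x\<in>{1..n}. a (v x) = k}"
        using Sn_inj[OF vS] by (rule inj_on_subset) simp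
      have "card {x\<in>{1..n}. a x = k} = card {x\<in>{1..n}. a (v x) = k}"
        unfolding e2[symmetric] by (rule card_image[OF e3])
      then show ?thesis using e1 by simp
    qed
    have g3: "g i \<le> g j" if "1 \<le> i" "i < j" "j \<le> n" "b i = b j" for i j
    proof -
      have "v i < v j" using uv(3) that unfolding Xm_def by auto
      then have "a (v i) \<le> a (v j)" using am by (simp add: monoD)
      then show ?thesis using that g_def by simp
    qed
    have wS: "w \<in> Sn n" using Sn_comp[OF uS vS] uv(4) by simp
    have g4: "w \<in> Xm n (\<lambda>x. (b x, g x))"
      unfolding Xm_def
    proof (intro CollectI conjI allI impI wS)
      fix i j assume ij: "1 \<le> i" "i < j" "j \<le> n" "(b i, g i) = (b j, g j)"
      have "v i < v j" using uv(3) ij unfolding Xm_def by auto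
      moreover have "a (v i) = a (v j)" using ij g_def by simp
      moreover have "v i \<in> {1..n}" "v j \<in> {1..n}" using ij vin by auto
      ultimately have "u (v i) < u (v j)" using uv(2) unfolding Xm_def by auto
      then show "w i < w j" using uv(4) by auto
    qed
    have "g \<in> G" unfolding G_def using g1 g2 g3 by simp
    then show ?thesis unfolding Fp T_def using g4 by simp
  qed
  have inj: "inj_on F D"
  proof (rule inj_onI)
    fix p q assume p: "p \<in> D" and q: "q \<in> D" and e: "F p = F q"
    obtain u v where uv: "p = (u,v)" "u \<in> Xm n a" "v \<in> Xm n b" "u \<circ> v = w"
      using p D_def by auto
    obtain u' v' where uv': "q = (u',v')" "u' \<in> Xm n a" "v' \<in> Xm n b" "u' \<circ> v' = w"
      using q D_def by auto
    have uS: "u \<in> Sn n" and vS: "v \<in> Sn n" using uv Xm_def by auto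
    have uS': "u' \<in> Sn n" and vS': "v' \<in> Sn n" using uv' Xm_def by auto
    have av: "a (v x) = a (v' x)" if "x \<in> {1..n}" for x
      using fun_cong[OF e, of x] uv uv' that F_def by simp
    have imgu: "u ` {y\<in>{1..n}. a y = k} = w ` {z\<in>{1..n}. a (v z) = k}"
      if "u \<in> Xm n a" "v \<in> Xm n b" "u \<circ> v = w" for u v k
    proof -
      have vS: "v \<in> Sn n" using that Xm_def by auto
      show ?thesis
      proof
        show "u ` {y\<in>{1..n}. a y = k} \<subseteq> w ` {z\<in>{1..n}. a (v z) = k}"
        proof
          fix t assume "t \<in> u ` {y\<in>{1..n}. a y = k}"
          then obtain y where y: "y \<in> {1..n}" "a y = k" "t = u y" by auto
          then obtain z where z: "z \<in> {1..n}" "v z = y" using Sn_surj[OF vS] by blast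
          have "t = w z" using y z that(3) by auto
          then show "t \<in> w ` {z\<in>{1..n}. a (v z) = k}" using z y by auto
        qed
        show "w ` {z\<in>{1..n}. a (v z) = k} \<subseteq> u ` {y\<in>{1..n}. a y = k}"
          using that(3) Sn_in[OF vS] by auto
      qed
    qed
    have uu: "u = u'"
    proof
      fix x
      show "u x = u' x"
      proof (cases "x \<in> {1..n}")
        case False
        then show ?thesis using Sn_out[OF uS] Sn_out[OF uS'] by simp
      next
        case True
        define A where "A = {y\<in>{1..n}. a y = a x}"
        have "u ` A = u' ` A"
        proof -
          have "u ` A = w ` {z\<in>{1..n}. a (v z) = a x}" using imgu[OF uv(2-4)] A_def by simp
          also have "\<dots> = w ` {z\<in>{1..n}. a (v' z) = a x}" using av by (metis (no_types, lifting) mem_Collect_eq)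
          also have "\<dots> = u' ` A" using imgu[OF uv'(2-4)] A_def by simp
          finally show ?thesis .
        qed
        moreover have "\<forall>y\<in>A. \<forall>z\<in>A. y < z \<longrightarrow> u y < u z"
          using uv(2) unfolding Xm_def A_def by auto
        moreover have "\<forall>y\<in>A. \<forall>z\<in>A. y < z \<longrightarrow> u' y < u' z"
          using uv'(2) unfolding Xm_def A_def by auto
        moreover have "x \<in> A" using True A_def by simp
        moreover have "finite A" using A_def by simp
        ultimately show ?thesis using smono_unique by blast
      qed
    qed
    have "v = v'"
    proof
      fix x
      have "u (v x) = u (v' x)" using uv(4) uv'(4) uu by (metis comp_apply)
      then show "v x = v' x" using Sn_inj[OF uS] by (simp add: inj_def)
    qed
    then show "p = q" using uu uv uv' by simp
  qed
  have surj: "g \<in> F ` D" if gT: "g \<in> T" for g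
  proof -
    have gG: "g \<in> G" and wX: "w \<in> Xm n (\<lambda>x. (b x, g x))" using gT T_def by auto
    have gE: "g \<in> {1..n} \<rightarrow>\<^sub>E {0..<m}"
      and gf: "\<And>k. card {x\<in>{1..n}. g x = k} = card {x\<in>{1..n}. a x = k}"
      and gm: "\<And>i j. 1 \<le> i \<Longrightarrow> i < j \<Longrightarrow> j \<le> n \<Longrightarrow> b i = b j \<Longrightarrow> g i \<le> g j"
      using gG G_def by auto
    have wS: "w \<in> Sn n" using wX Xm_def by auto
    have wm: "w i < w j" if "1 \<le> i" "i < j" "j \<le> n" "b i = b j" "g i = g j" for i j
      using wX that unfolding Xm_def by auto
    have wle: "w z \<le> n" if "z \<in> {1..n}" for z using Sn_in[OF wS that] by simp
    define key where "key = (\<lambda>z. g z * (n+1) + w z)"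
    have kl: "key z < key z' \<longleftrightarrow> g z < g z' \<or> (g z = g z' \<and> w z < w z')"
      if "z \<in> {1..n}" "z' \<in> {1..n}" for z z'
      using keyless[OF wle[OF that(1)] wle[OF that(2)]] key_def by simp
    have kle: "key z \<le> key z' \<longleftrightarrow> g z < g z' \<or> (g z = g z' \<and> w z \<le> w z')"
      if "z \<in> {1..n}" "z' \<in> {1..n}" for z z'
      using keyle[OF wle[OF that(1)] wle[OF that(2)]] key_def by simp
    have kinj: "inj_on key {1..n}"
    proof (rule inj_onI)
      fix z z' assume z: "z \<in> {1..n}" "z' \<in> {1..n}" "key z = key z'"
      then have "g z = g z'" "w z = w z'" using kle[OF z(1,2)] kle[OF z(2,1)] by auto
      then show "z = z'" using Sn_inj[OF wS] by (simp add: inj_def)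
    qed
    define v where "v = (\<lambda>z. if z \<in> {1..n} then card {z'\<in>{1..n}. key z' \<le> key z} else z)"
    have vp: "v permutes {1..n}" using rank_perm(1)[OF kinj] v_def by simp
    have vmono: "\<And>z z'. z \<in> {1..n} \<Longrightarrow> z' \<in> {1..n} \<Longrightarrow> key z < key z' \<Longrightarrow> v z < v z'"
      using rank_perm(2)[OF kinj] v_def by simp
    have vS: "v \<in> Sn n" using vp Sn_def by simp
    have av: "a (v z) = g z" if z: "z \<in> {1..n}" for z
    proof -
      define k where "k = g z"
      have "{z'\<in>{1..n}. key z' \<le> key z} = {z'\<in>{1..n}. g z' < k} \<union> {z'\<in>{1..n}. g z' = k \<and> w z' \<le> w z}"
        using kle z k_def by auto
      then have c1: "v z = card {z'\<in>{1..n}. g z' < k} + card {z'\<in>{1..n}. g z' = k \<and> w z' \<le> w z}"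
        using z v_def by (simp add: card_Un_disjoint disjoint_iff)
      have c2: "card {z'\<in>{1..n}. g z' < k} = card {x\<in>{1..n}. a x < k}"
        using fiber_sum[of n g k] fiber_sum[of n a k] gf by simp
      have c3: "1 \<le> card {z'\<in>{1..n}. g z' = k \<and> w z' \<le> w z}"
      proof -
        have "z \<in> {z'\<in>{1..n}. g z' = k \<and> w z' \<le> w z}" using z k_def by simp
        then have "{z'\<in>{1..n}. g z' = k \<and> w z' \<le> w z} \<noteq> {}" by blast
        then show ?thesis by (simp add: Suc_leI card_gt_0_iff)
      qed
      have c4: "card {z'\<in>{1..n}. g z' = k \<and> w z' \<le> w z} \<le> card {x\<in>{1..n}. a x = k}"
      proof -
        have "card {z'\<in>{1..n}. g z' = k \<and> w z' \<le> w z} \<le> card {z'\<in>{1..n}. g z' = k}"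
          by (rule card_mono) auto
        then show ?thesis using gf by simp
      qed
      have mem: "v z \<in> {x. card {x\<in>{1..n}. a x < k} < x \<and> x \<le> card {x\<in>{1..n}. a x < k} + card {x\<in>{1..n}. a x = k}}"
        using c1 c2 c3 c4 by simp
      have "v z \<in> {x\<in>{1..n}. a x = k}"
        by (subst fiber_interval[OF am, of n k]) (rule mem)
      then show ?thesis using k_def by simp
    qed
    define u where "u = w \<circ> inv v"
    have uS: "u \<in> Sn n"
      using u_def Sn_perm[OF wS] permutes_inv[OF vp] permutes_compose Sn_def by blast
    have uvw: "u \<circ> v = w"
      using u_def permutes_inv_o(2)[OF vp] by (metis comp_id o_assoc)
    have vX: "v \<in> Xm n b"
      unfolding Xm_def
    proof (intro CollectI conjI allI impI vS)
      fix i j assume ij: "1 \<le> i" "i < j" "j \<le> n" "b i = b j"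
      have "g i \<le> g j" using gm ij by blast
      then have "key i < key j" using kl[of i j] wm[OF ij] ij by auto
      then show "v i < v j" using vmono ij by auto
    qed
    have uX: "u \<in> Xm n a"
      unfolding Xm_def
    proof (intro CollectI conjI allI impI uS)
      fix x y assume xy: "1 \<le> x" "x < y" "y \<le> n" "a x = a y"
      have ip: "inv v permutes {1..n}" using permutes_inv[OF vp] .
      define z where "z = inv v x"
      define z' where "z' = inv v y"
      have zin: "z \<in> {1..n}" "z' \<in> {1..n}"
        using xy ip unfolding z_def z'_def by (simp_all only: permutes_in_image) auto
      have vz: "v z = x" "v z' = y" using permutes_inverses(1)[OF vp] z_def z'_def by auto
      have gz: "g z = g z'" using av[OF zin(1)] av[OF zin(2)] vz xy by simp
      have "z \<noteq> z'" using vz xy by auto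
      then have "w z \<noteq> w z'" using Sn_inj[OF wS] unfolding inj_def by blast
      moreover have "\<not> w z' < w z"
      proof
        assume "w z' < w z"
        then have "key z' < key z" using kl[OF zin(2,1)] gz by simp
        then have "v z' < v z" using vmono zin by blast
        then show False using vz xy by simp
      qed
      ultimately have "w z < w z'" by simp
      then show "u x < u y" using u_def z_def z'_def by simp
    qed
    have "F (u,v) = g"
    proof
      fix x show "F (u,v) x = g x"
      proof (cases "x \<in> {1..n}")
        case True then show ?thesis using av F_def by simp
      next
        case False then show ?thesis using F_def PiE_arb[OF gE False] False by (auto simp: restrict_def)
      qed
    qed
    moreover have "(u,v) \<in> D" using uX vX uvw D_def by simp
    ultimately show ?thesis by (metis image_eqI)
  qed
  have "bij_betw F D T"
    unfolding bij_betw_def using inj img surj by blast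
  then show ?thesis using bij_betw_same_card D_def T_def by blast
qed



abbreviation ps :: "nat list \<Rightarrow> nat \<Rightarrow> nat" where
  "ps \<alpha> k \<equiv> sum_list (take k \<alpha>)"

lemma ps_Suc: "k < length \<alpha> \<Longrightarrow> ps \<alpha> (Suc k) = ps \<alpha> k + \<alpha> ! k"
  by (simp add: take_Suc_conv_app_nth)

lemma ps_len: "is_comp n \<alpha> \<Longrightarrow> ps \<alpha> (length \<alpha>) = n"
  by (simp add: is_comp_def)

lemma ps_pos: "is_comp n \<alpha> \<Longrightarrow> k < length \<alpha> \<Longrightarrow> 0 < \<alpha> ! k"
  by (simp add: is_comp_def)

lemma ps_strict: assumes "is_comp n \<alpha>" "k < k'" "k' \<le> length \<alpha>" shows "ps \<alpha> k < ps \<alpha> k'"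
  using assms(2,3)
proof (induction k')
  case 0 then show ?case by simp
next
  case (Suc k')
  have "ps \<alpha> (Suc k') = ps \<alpha> k' + \<alpha> ! k'" using Suc.prems ps_Suc by simp
  moreover have "0 < \<alpha> ! k'" using Suc.prems ps_pos[OF assms(1)] by simp
  ultimately show ?case using Suc by (cases "k = k'") auto
qed

lemma ps_mono: assumes "is_comp n \<alpha>" "k \<le> k'" "k' \<le> length \<alpha>" shows "ps \<alpha> k \<le> ps \<alpha> k'"
  using ps_strict[OF assms(1), of k k'] assms by (cases "k = k'") auto

lemma cs_img: "comp_set \<alpha> = ps \<alpha> ` {1..<length \<alpha>}"
  unfolding comp_set_def by auto

lemma cs_finite: "finite (comp_set \<alpha>)"
  unfolding cs_img by simp

lemma cs_sub: assumes "is_comp n \<alpha>" shows "comp_set \<alpha> \<subseteq> {1..<n}"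
proof
  fix s assume "s \<in> comp_set \<alpha>"
  then obtain k where k: "1 \<le> k" "k < length \<alpha>" "s = ps \<alpha> k" unfolding cs_img by auto
  have "ps \<alpha> 0 < ps \<alpha> k" using ps_strict[OF assms, of 0 k] k by simp
  moreover have "ps \<alpha> k < ps \<alpha> (length \<alpha>)" using ps_strict[OF assms, of k "length \<alpha>"] k by simp
  ultimately show "s \<in> {1..<n}" using k ps_len[OF assms] by simp
qed

definition blk :: "nat set \<Rightarrow> nat \<Rightarrow> nat" where
  "blk I i = card {s\<in>I. s < i}"

lemma blk_mono: "finite I \<Longrightarrow> mono (blk I)"
  unfolding blk_def by (intro monoI card_mono) auto

lemma blk_Suc: "finite I \<Longrightarrow> blk I (Suc i) = blk I i + (if i \<in> I then 1 else 0)"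
proof -
  assume fin: "finite I"
  show ?thesis
  proof (cases "i \<in> I")
    case True
    have "{s\<in>I. s < Suc i} = insert i {s\<in>I. s < i}" using True by auto
    then show ?thesis using True fin unfolding blk_def by simp
  next
    case False
    have "{s\<in>I. s < Suc i} = {s\<in>I. s < i}" using False less_Suc_eq by auto
    then show ?thesis using False unfolding blk_def by simp
  qed
qed

lemma cut_blk:
  assumes "finite I" "I \<subseteq> {1..<n}"
  shows "{i\<in>{1..<n}. blk I i \<noteq> blk I (Suc i)} = I"
  using assms blk_Suc[OF assms(1)] by auto

lemma blk_val:
  assumes c: "is_comp n \<alpha>" and k: "k < length \<alpha>" and x: "ps \<alpha> k < x" "x \<le> ps \<alpha> (Suc k)"
  shows "blk (comp_set \<alpha>) x = k"
proof -
  have "{s\<in>comp_set \<alpha>. s < x} = ps \<alpha> ` {1..k}"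
  proof
    show "{s\<in>comp_set \<alpha>. s < x} \<subseteq> ps \<alpha> ` {1..k}"
    proof
      fix s assume "s \<in> {s\<in>comp_set \<alpha>. s < x}"
      then obtain l where l: "1 \<le> l" "l < length \<alpha>" "s = ps \<alpha> l" "s < x" unfolding cs_img by auto
      have "l \<le> k"
      proof (rule ccontr)
        assume "\<not> l \<le> k"
        then have "ps \<alpha> (Suc k) \<le> ps \<alpha> l" using ps_mono[OF c, of "Suc k" l] l by simp
        then show False using l x by simp
      qed
      then show "s \<in> ps \<alpha> ` {1..k}" using l by auto
    qed
    show "ps \<alpha> ` {1..k} \<subseteq> {s\<in>comp_set \<alpha>. s < x}"
    proof
      fix s assume "s \<in> ps \<alpha> ` {1..k}"
      then obtain l where l: "1 \<le> l" "l \<le> k" "s = ps \<alpha> l" by auto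
      have "ps \<alpha> l \<le> ps \<alpha> k" using ps_mono[OF c, of l k] l k by simp
      then show "s \<in> {s\<in>comp_set \<alpha>. s < x}" using l k x unfolding cs_img by auto
    qed
  qed
  moreover have "inj_on (ps \<alpha>) {1..k}"
  proof (rule inj_onI)
    fix p q assume p: "p \<in> {1..k}" and q: "q \<in> {1..k}" and e: "ps \<alpha> p = ps \<alpha> q"
    show "p = q"
    proof (rule ccontr)
      assume "p \<noteq> q"
      then consider "p < q" | "q < p" by linarith
      then show False
        using ps_strict[OF c, of p q] ps_strict[OF c, of q p] p q k e by cases auto
    qed
  qed
  ultimately show ?thesis unfolding blk_def by (simp add: card_image)
qed

lemma blk_exists:
  assumes c: "is_comp n \<alpha>" and x: "x \<in> {1..n}"
  shows "\<exists>k<length \<alpha>. ps \<alpha> k < x \<and> x \<le> ps \<alpha> (Suc k)"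
proof -
  define L where "L = (LEAST l. \<not> ps \<alpha> l < x)"
  have nl: "\<not> ps \<alpha> (length \<alpha>) < x" using ps_len[OF c] x by simp
  have L1: "\<not> ps \<alpha> L < x" unfolding L_def using nl by (rule LeastI)
  have L2: "L \<le> length \<alpha>" unfolding L_def using nl by (rule Least_le)
  have L3: "L \<noteq> 0"
  proof
    assume "L = 0"
    then show False using L1 x by simp
  qed
  define k where "k = L - 1"
  have "ps \<alpha> k < x" unfolding k_def L_def
    using not_less_Least[of "L - 1" "\<lambda>l. \<not> ps \<alpha> l < x"] L3 L_def by auto
  moreover have "Suc k = L" using L3 k_def by simp
  ultimately show ?thesis using L1 L2 by (intro exI[of _ k]) auto
qed

lemma blk_fiber_set:
  assumes c: "is_comp n \<alpha>" and k: "k < length \<alpha>"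
  shows "{x\<in>{1..n}. blk (comp_set \<alpha>) x = k} = {ps \<alpha> k<..ps \<alpha> (Suc k)}"
proof
  show "{x\<in>{1..n}. blk (comp_set \<alpha>) x = k} \<subseteq> {ps \<alpha> k<..ps \<alpha> (Suc k)}"
  proof
    fix x assume x: "x \<in> {x\<in>{1..n}. blk (comp_set \<alpha>) x = k}"
    then obtain k' where k': "k' < length \<alpha>" "ps \<alpha> k' < x" "x \<le> ps \<alpha> (Suc k')"
      using blk_exists[OF c] by blast
    have "k' = k" using blk_val[OF c k'] x by simp
    then show "x \<in> {ps \<alpha> k<..ps \<alpha> (Suc k)}" using k' by simp
  qed
  show "{ps \<alpha> k<..ps \<alpha> (Suc k)} \<subseteq> {x\<in>{1..n}. blk (comp_set \<alpha>) x = k}"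
  proof
    fix x assume x: "x \<in> {ps \<alpha> k<..ps \<alpha> (Suc k)}"
    have "ps \<alpha> (Suc k) \<le> n" using ps_mono[OF c, of "Suc k" "length \<alpha>"] k ps_len[OF c] by simp
    then have "x \<in> {1..n}" using x by auto
    then show "x \<in> {x\<in>{1..n}. blk (comp_set \<alpha>) x = k}" using blk_val[OF c k] x by simp
  qed
qed

lemma blk_fiber:
  assumes c: "is_comp n \<alpha>" and k: "k < length \<alpha>"
  shows "card {x\<in>{1..n}. blk (comp_set \<alpha>) x = k} = \<alpha> ! k"
  using blk_fiber_set[OF c k] ps_Suc[OF k] by simp

lemma blk_range:
  assumes c: "is_comp n \<alpha>" and x: "x \<in> {1..n}"
  shows "blk (comp_set \<alpha>) x < length \<alpha>"
  using blk_exists[OF c x] blk_val[OF c] by fastforce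



lemma comp_set_snoc:
  assumes "xs \<noteq> []"
  shows "comp_set (xs @ [y]) = insert (sum_list xs) (comp_set xs)"
proof -
  have "comp_set (xs @ [y]) = ps (xs @ [y]) ` {1..<length xs + 1}" by (simp add: cs_img)
  also have "\<dots> = ps xs ` {1..length xs}"
    by (rule image_cong) auto
  also have "{1..length xs} = insert (length xs) {1..<length xs}"
    using assms by (cases xs) auto
  also have "ps xs ` \<dots> = insert (sum_list xs) (comp_set xs)" by (simp add: cs_img)
  finally show ?thesis .
qed

lemma comp_exists:
  assumes fin: "finite I"
  shows "\<forall>n. I \<subseteq> {1..<n} \<longrightarrow> (\<exists>\<gamma>. is_comp n \<gamma> \<and> comp_set \<gamma> = I)"
  using fin
proof (induction rule: finite_linorder_max_induct)
  case empty
  show ?case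
  proof (intro allI impI)
    fix n :: nat
    show "\<exists>\<gamma>. is_comp n \<gamma> \<and> comp_set \<gamma> = {}"
    proof (cases "n = 0")
      case True
      then show ?thesis by (intro exI[of _ "[]"]) (simp add: is_comp_def comp_set_def)
    next
      case False
      then show ?thesis by (intro exI[of _ "[n]"]) (simp add: is_comp_def comp_set_def)
    qed
  qed
next
  case (insert b A)
  show ?case
  proof (intro allI impI)
    fix n :: nat assume sub: "insert b A \<subseteq> {1..<n}"
    then have "A \<subseteq> {1..<b}" using insert.hyps(2) by auto
    then obtain \<gamma> where g: "is_comp b \<gamma>" "comp_set \<gamma> = A" using insert.IH by blast
    have b: "1 \<le> b" "b < n" using sub by auto
    have ne: "\<gamma> \<noteq> []" using g(1) b by (auto simp: is_comp_def)
    have "is_comp n (\<gamma> @ [n - b])" using g(1) b by (auto simp: is_comp_def)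
    moreover have "comp_set (\<gamma> @ [n - b]) = insert b A"
      using comp_set_snoc[OF ne] g by (simp add: is_comp_def)
    ultimately show "\<exists>\<gamma>. is_comp n \<gamma> \<and> comp_set \<gamma> = insert b A" by blast
  qed
qed

lemma refines_of_subset:
  "\<And>n \<gamma>. is_comp n \<gamma> \<Longrightarrow> is_comp n \<beta> \<Longrightarrow> comp_set \<beta> \<subseteq> comp_set \<gamma> \<Longrightarrow> refines \<gamma> \<beta>"
proof (induction \<beta>)
  case Nil
  then have "n = 0" by (simp add: is_comp_def)
  then have "\<gamma> = []" using Nil.prems(1) by (cases \<gamma>) (auto simp: is_comp_def)
  then show ?case unfolding refines_def by (intro exI[of _ "[]"]) simp
next
  case (Cons b \<beta>')
  show ?case
  proof (cases "\<beta>' = []")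
    case True
    then have "n = b" "0 < b" using Cons.prems(2) by (auto simp: is_comp_def)
    then have "\<gamma> \<noteq> []" using Cons.prems(1) by (auto simp: is_comp_def)
    then show ?thesis unfolding refines_def using True \<open>n = b\<close> Cons.prems(1)
      by (intro exI[of _ "[\<gamma>]"]) (simp add: is_comp_def)
  next
    case False
    have "b \<in> comp_set (b # \<beta>')" unfolding comp_set_def using False
      by (intro CollectI exI[of _ 1]) auto
    then have "b \<in> comp_set \<gamma>" using Cons.prems(3) by blast
    then obtain k where k: "1 \<le> k" "k < length \<gamma>" "ps \<gamma> k = b" unfolding cs_img by auto
    define \<gamma>1 where "\<gamma>1 = take k \<gamma>"
    define \<gamma>2 where "\<gamma>2 = drop k \<gamma>"
    have cb: "is_comp n (b # \<beta>')" by (rule Cons.prems(2))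
    have cb': "is_comp (n - b) \<beta>'" using cb by (auto simp: is_comp_def)
    have sg: "sum_list \<gamma> = sum_list \<gamma>1 + sum_list \<gamma>2"
      unfolding \<gamma>1_def \<gamma>2_def by (metis append_take_drop_id sum_list_append)
    have cg2: "is_comp (n - b) \<gamma>2"
      using Cons.prems(1) sg k(3) unfolding \<gamma>1_def \<gamma>2_def is_comp_def
      by (auto dest: in_set_dropD)
    have sub2: "comp_set \<beta>' \<subseteq> comp_set \<gamma>2"
    proof
      fix s assume "s \<in> comp_set \<beta>'"
      then obtain k' where k': "1 \<le> k'" "k' < length \<beta>'" "s = ps \<beta>' k'" unfolding cs_img by auto
      have "b + s = ps (b # \<beta>') (Suc k')" using k' by simp
      then have "b + s \<in> comp_set (b # \<beta>')" unfolding cs_img using k' by force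
      then have "b + s \<in> comp_set \<gamma>" using Cons.prems(3) by blast
      then obtain k'' where k'': "1 \<le> k''" "k'' < length \<gamma>" "ps \<gamma> k'' = b + s" unfolding cs_img by auto
      have "0 < s" using k' ps_strict[OF cb', of 0 k'] by simp
      have "k < k''"
      proof (rule ccontr)
        assume "\<not> k < k''"
        then have "ps \<gamma> k'' \<le> ps \<gamma> k" using ps_mono[OF Cons.prems(1), of k'' k] k by simp
        then show False using k k'' \<open>0 < s\<close> by simp
      qed
      have "ps \<gamma> k'' = ps \<gamma> k + ps \<gamma>2 (k'' - k)"
        unfolding \<gamma>2_def using \<open>k < k''\<close>
        by (metis le_add_diff_inverse less_imp_le sum_list_append take_add)
      then have "ps \<gamma>2 (k'' - k) = s" using k k'' by simp
      moreover have "1 \<le> k'' - k" "k'' - k < length \<gamma>2" using \<open>k < k''\<close> k'' unfolding \<gamma>2_def by auto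
      ultimately show "s \<in> comp_set \<gamma>2" unfolding cs_img by force
    qed
    obtain xss where xss: "concat xss = \<gamma>2" "\<forall>xs\<in>set xss. xs \<noteq> []" "map sum_list xss = \<beta>'"
      using Cons.IH[OF cg2 cb' sub2] unfolding refines_def by blast
    have "\<gamma>1 \<noteq> []" using k unfolding \<gamma>1_def by (cases \<gamma>) auto
    moreover have "sum_list \<gamma>1 = b" using k \<gamma>1_def by simp
    moreover have "\<gamma>1 @ \<gamma>2 = \<gamma>" unfolding \<gamma>1_def \<gamma>2_def by simp
    ultimately show ?thesis unfolding refines_def using xss
      by (intro exI[of _ "\<gamma>1 # xss"]) simp
  qed
qed

lemma length_le_sum: "\<forall>x\<in>set xs. 0 < (x::nat) \<Longrightarrow> length xs \<le> sum_list xs"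
  by (induction xs) auto

lemma comps_finite: "finite {\<gamma>. is_comp n \<gamma>}"
proof -
  have "{\<gamma>. is_comp n \<gamma>} \<subseteq> {xs. set xs \<subseteq> {0..n} \<and> length xs \<le> n}"
  proof
    fix \<gamma> assume "\<gamma> \<in> {\<gamma>. is_comp n \<gamma>}"
    then have c: "\<forall>x\<in>set \<gamma>. 0 < x" "sum_list \<gamma> = n" by (auto simp: is_comp_def)
    have "set \<gamma> \<subseteq> {0..n}" using c member_le_sum_list by fastforce
    moreover have "length \<gamma> \<le> n" using length_le_sum[OF c(1)] c(2) by simp
    ultimately show "\<gamma> \<in> {xs. set xs \<subseteq> {0..n} \<and> length xs \<le> n}" by simp
  qed
  then show ?thesis using finite_lists_length_le[of "{0..n}" n] finite_subset by blast
qed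

lemma des_sub_iff:
  assumes wS: "w \<in> Sn n"
    and contig: "\<And>i l j. 1 \<le> i \<Longrightarrow> i \<le> l \<Longrightarrow> l \<le> j \<Longrightarrow> j \<le> n \<Longrightarrow> c i = c j \<Longrightarrow> c l = c i"
  shows "Des n w \<subseteq> {i\<in>{1..<n}. c i \<noteq> c (Suc i)} \<longleftrightarrow>
         (\<forall>i j. 1 \<le> i \<longrightarrow> i < j \<longrightarrow> j \<le> n \<longrightarrow> c i = c j \<longrightarrow> w i < w j)"
proof
  assume H: "\<forall>i j. 1 \<le> i \<longrightarrow> i < j \<longrightarrow> j \<le> n \<longrightarrow> c i = c j \<longrightarrow> w i < w j"
  show "Des n w \<subseteq> {i\<in>{1..<n}. c i \<noteq> c (Suc i)}"
  proof
    fix i assume "i \<in> Des n w"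
    then have i: "i \<in> {1..<n}" "w i > w (Suc i)" unfolding Des_def by auto
    have "c i \<noteq> c (Suc i)"
    proof
      assume "c i = c (Suc i)"
      then have "w i < w (Suc i)" using H i(1) by auto
      then show False using i(2) by simp
    qed
    then show "i \<in> {i\<in>{1..<n}. c i \<noteq> c (Suc i)}" using i by simp
  qed
next
  assume D: "Des n w \<subseteq> {i\<in>{1..<n}. c i \<noteq> c (Suc i)}"
  show "\<forall>i j. 1 \<le> i \<longrightarrow> i < j \<longrightarrow> j \<le> n \<longrightarrow> c i = c j \<longrightarrow> w i < w j"
  proof (intro allI impI)
    fix i j assume ij: "1 \<le> i" "i < j" "j \<le> n" "c i = c j"
    have le: "w i \<le> w l" if "i \<le> l" "l \<le> j" for l
      using that
    proof (induction l rule: dec_induct)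
      case base then show ?case by simp
    next
      case (step l)
      have "c l = c i" using contig[OF ij(1) step(1) _ ij(3,4)] step by simp
      moreover have "c (Suc l) = c i" using contig[OF ij(1) _ step(4) ij(3,4)] step by simp
      ultimately have "l \<notin> Des n w" using D by auto
      moreover have "l \<in> {1..<n}" using step ij by auto
      ultimately have "w l \<le> w (Suc l)" unfolding Des_def by auto
      then show ?case using step by simp
    qed
    have "w i \<le> w j" using le[of j] ij by simp
    moreover have "w i \<noteq> w j" using Sn_inj[OF wS] ij(2) unfolding inj_def by (metis less_irrefl)
    ultimately show "w i < w j" by simp
  qed
qed



lemma const_on_blocks:
  fixes c d :: "nat \<Rightarrow> nat"
  assumes cm: "mono c"
    and H: "\<And>i. i \<in> {1..<n} \<Longrightarrow> c i = c (Suc i) \<Longrightarrow> d i = d (Suc i)"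
    and x: "1 \<le> x" "x \<le> y" "y \<le> n" "c x = c y"
  shows "d x = d y"
proof -
  have "d x = d l" if "x \<le> l" "l \<le> y" for l
    using that
  proof (induction l rule: dec_induct)
    case base then show ?case by simp
  next
    case (step l)
    have "c x \<le> c l" "c l \<le> c (Suc l)" "c (Suc l) \<le> c y"
      using cm step by (auto intro: monoD)
    then have "c l = c (Suc l)" using x(4) by simp
    moreover have "l \<in> {1..<n}" using step x by auto
    ultimately have "d l = d (Suc l)" using H by blast
    then show ?case using step by simp
  qed
  then show ?thesis using x by simp
qed

lemma eta_card:
  assumes ca: "is_comp n \<alpha>" and cb: "is_comp n \<beta>"
  defines "fa \<equiv> blk (comp_set \<alpha>)" and "fb \<equiv> blk (comp_set \<beta>)"
  defines "G0 \<equiv> {g \<in> {1..n} \<rightarrow>\<^sub>E {0..<length \<alpha>}.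
             (\<forall>k. card {x\<in>{1..n}. g x = k} = card {x\<in>{1..n}. fa x = k}) \<and>
             (\<forall>i j. 1 \<le> i \<longrightarrow> i < j \<longrightarrow> j \<le> n \<longrightarrow> fb i = fb j \<longrightarrow> g i \<le> g j) \<and>
             (\<forall>i\<in>{1..<n}. fb i = fb (Suc i) \<longrightarrow> g i = g (Suc i))}"
  shows "card G0 = eta \<beta> \<alpha>"
proof -
  define m where "m = length \<alpha>"
  define p where "p = length \<beta>"
  define E where "E = {f \<in> {0..<p} \<rightarrow>\<^sub>E {0..<m}. \<forall>j<m. \<alpha> ! j = (\<Sum>i\<in>{i. i < p \<and> f i = j}. \<beta> ! i)}"
  have etaE: "eta \<beta> \<alpha> = card E" unfolding eta_def E_def m_def p_def by simp
  have fbm: "mono fb" unfolding fb_def by (rule blk_mono[OF cs_finite])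
  have fbr: "fb x < p" if "x \<in> {1..n}" for x
    using blk_range[OF cb that] fb_def p_def by simp
  have far: "fa x < m" if "x \<in> {1..n}" for x
    using blk_range[OF ca that] fa_def m_def by simp
  have fbf: "card {x\<in>{1..n}. fb x = j} = \<beta> ! j" if "j < p" for j
    using blk_fiber[OF cb] that fb_def p_def by simp
  have faf: "card {x\<in>{1..n}. fa x = k} = (if k < m then \<alpha> ! k else 0)" for k
  proof (cases "k < m")
    case True then show ?thesis using blk_fiber[OF ca] fa_def m_def by simp
  next
    case False
    then have "{x\<in>{1..n}. fa x = k} = {}" using far by fastforce
    then show ?thesis using False by simp
  qed
  have fbne: "\<exists>x\<in>{1..n}. fb x = j" if "j < p" for j
  proof -
    have "0 < \<beta> ! j" using cb that p_def by (simp add: is_comp_def)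
    then have "card {x\<in>{1..n}. fb x = j} \<noteq> 0" using fbf[OF that] by simp
    then have "{x\<in>{1..n}. fb x = j} \<noteq> {}" by (metis card.empty)
    then show ?thesis by blast
  qed
  have cfib: "card {x\<in>{1..n}. f (fb x) = k} = (\<Sum>i\<in>{i. i < p \<and> f i = k}. \<beta> ! i)" for f :: "nat \<Rightarrow> nat" and k
  proof -
    have "{x\<in>{1..n}. f (fb x) = k} = (\<Union>i\<in>{i. i < p \<and> f i = k}. {x\<in>{1..n}. fb x = i})"
      using fbr by auto
    moreover have "card (\<Union>i\<in>{i. i < p \<and> f i = k}. {x\<in>{1..n}. fb x = i}) = (\<Sum>i\<in>{i. i < p \<and> f i = k}. card {x\<in>{1..n}. fb x = i})"
      by (rule card_UN_disjoint) auto
    ultimately have "card {x\<in>{1..n}. f (fb x) = k} = (\<Sum>i\<in>{i. i < p \<and> f i = k}. card {x\<in>{1..n}. fb x = i})"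
      by simp
    also have "\<dots> = (\<Sum>i\<in>{i. i < p \<and> f i = k}. \<beta> ! i)"
      by (intro sum.cong refl fbf) simp
    finally show ?thesis .
  qed
  define \<phi> where "\<phi> = (\<lambda>f::nat\<Rightarrow>nat. restrict (f \<circ> fb) {1..n})"
  have img: "\<phi> f \<in> G0" if fE: "f \<in> E" for f
  proof -
    have fP: "f \<in> {0..<p} \<rightarrow>\<^sub>E {0..<m}" and fc: "\<forall>j<m. \<alpha> ! j = (\<Sum>i\<in>{i. i < p \<and> f i = j}. \<beta> ! i)"
      using fE E_def by auto
    have g1: "\<phi> f \<in> {1..n} \<rightarrow>\<^sub>E {0..<length \<alpha>}"
      unfolding \<phi>_def restrict_PiE_iff m_def[symmetric]
    proof
      fix x assume "x \<in> {1..n}"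
      then have "fb x \<in> {0..<p}" using fbr by simp
      then show "(f \<circ> fb) x \<in> {0..<m}" using fP by auto
    qed
    have g2: "card {x\<in>{1..n}. \<phi> f x = k} = card {x\<in>{1..n}. fa x = k}" for k
    proof -
      have "{x\<in>{1..n}. \<phi> f x = k} = {x\<in>{1..n}. f (fb x) = k}" unfolding \<phi>_def by auto
      then have e: "card {x\<in>{1..n}. \<phi> f x = k} = (\<Sum>i\<in>{i. i < p \<and> f i = k}. \<beta> ! i)" using cfib by simp
      show ?thesis
      proof (cases "k < m")
        case True then show ?thesis using e fc faf by simp
      next
        case False
        have "{i. i < p \<and> f i = k} = {}" using fP False by fastforce
        then have "card {x\<in>{1..n}. \<phi> f x = k} = 0" using e by (simp only: sum.empty)
        then show ?thesis using faf False by simp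
      qed
    qed
    have g3: "\<forall>i j. 1 \<le> i \<longrightarrow> i < j \<longrightarrow> j \<le> n \<longrightarrow> fb i = fb j \<longrightarrow> \<phi> f i \<le> \<phi> f j"
      unfolding \<phi>_def by auto
    have g4: "\<forall>i\<in>{1..<n}. fb i = fb (Suc i) \<longrightarrow> \<phi> f i = \<phi> f (Suc i)"
      unfolding \<phi>_def by auto
    show ?thesis unfolding G0_def using g1 g2 g3 g4 by blast
  qed
  have inj: "inj_on \<phi> E"
  proof (rule inj_onI)
    fix f f' assume f: "f \<in> E" and f': "f' \<in> E" and e: "\<phi> f = \<phi> f'"
    have fP: "f \<in> {0..<p} \<rightarrow>\<^sub>E {0..<m}" "f' \<in> {0..<p} \<rightarrow>\<^sub>E {0..<m}" using f f' E_def by auto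
    show "f = f'"
    proof
      fix j show "f j = f' j"
      proof (cases "j < p")
        case True
        then obtain x where x: "x \<in> {1..n}" "fb x = j" using fbne by blast
        have "\<phi> f x = \<phi> f' x" using e by simp
        then show ?thesis using x unfolding \<phi>_def by simp
      next
        case False
        then show ?thesis using PiE_arb[OF fP(1)] PiE_arb[OF fP(2)] by simp
      qed
    qed
  qed
  have surj: "g \<in> \<phi> ` E" if gG: "g \<in> G0" for g
  proof -
    have gP: "g \<in> {1..n} \<rightarrow>\<^sub>E {0..<m}"
      and gf: "\<And>k. card {x\<in>{1..n}. g x = k} = card {x\<in>{1..n}. fa x = k}"
      and gc: "\<And>i. i \<in> {1..<n} \<Longrightarrow> fb i = fb (Suc i) \<Longrightarrow> g i = g (Suc i)"
      using gG unfolding G0_def m_def by auto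
    have const: "g x = g y" if "x \<in> {1..n}" "y \<in> {1..n}" "fb x = fb y" for x y
    proof (cases "x \<le> y")
      case True then show ?thesis using const_on_blocks[of fb n g x y, OF fbm gc] that by auto
    next
      case False then show ?thesis using const_on_blocks[of fb n g y x, OF fbm gc] that by auto
    qed
    define sel where "sel = (\<lambda>j. SOME x. x \<in> {1..n} \<and> fb x = j)"
    have sel: "sel j \<in> {1..n} \<and> fb (sel j) = j" if "j < p" for j
      unfolding sel_def using fbne[OF that] by (metis (mono_tags, lifting) someI_ex)
    define f where "f = (\<lambda>j. if j < p then g (sel j) else undefined)"
    have gphi: "\<phi> f = g"
    proof
      fix x show "\<phi> f x = g x"
      proof (cases "x \<in> {1..n}")
        case True
        have s: "sel (fb x) \<in> {1..n}" "fb (sel (fb x)) = fb x" using sel fbr[OF True] by auto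
        then show ?thesis using True const[OF s(1) True s(2)] fbr[OF True] unfolding \<phi>_def f_def by simp
      next
        case False then show ?thesis using PiE_arb[OF gP False] False unfolding \<phi>_def by auto
      qed
    qed
    have fP: "f \<in> {0..<p} \<rightarrow>\<^sub>E {0..<m}"
    proof (rule PiE_I)
      fix j assume "j \<in> {0..<p}"
      then have "sel j \<in> {1..n}" using sel by simp
      then show "f j \<in> {0..<m}" using gP \<open>j \<in> {0..<p}\<close> unfolding f_def by auto
    next
      fix j assume "j \<notin> {0..<p}" then show "f j = undefined" unfolding f_def by simp
    qed
    have fc: "\<forall>j<m. \<alpha> ! j = (\<Sum>i\<in>{i. i < p \<and> f i = j}. \<beta> ! i)"
    proof (intro allI impI)
      fix k assume k: "k < m"
      have "\<alpha> ! k = card {x\<in>{1..n}. fa x = k}" using faf k by simp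
      also have "\<dots> = card {x\<in>{1..n}. g x = k}" using gf by simp
      also have "{x\<in>{1..n}. g x = k} = {x\<in>{1..n}. f (fb x) = k}"
        using gphi unfolding \<phi>_def by (auto simp: fun_eq_iff restrict_def split: if_splits) 
      also have "card \<dots> = (\<Sum>i\<in>{i. i < p \<and> f i = k}. \<beta> ! i)" by (rule cfib)
      finally show "\<alpha> ! k = (\<Sum>i\<in>{i. i < p \<and> f i = k}. \<beta> ! i)" .
    qed
    have "f \<in> E" unfolding E_def using fP fc by simp
    then show ?thesis using gphi by (metis image_eqI)
  qed
  have "bij_betw \<phi> E G0" unfolding bij_betw_def using inj img surj by blast
  then have "card E = card G0" by (rule bij_betw_same_card)
  then show ?thesis using etaE by simp
qed



lemma count_sum: "finite A \<Longrightarrow> (\<Sum>x\<in>A. if P x then (1::'k::comm_ring_1) else 0) = of_nat (card {x\<in>A. P x})"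
  by (simp add: sum.inter_filter[symmetric])

lemma amult_BI:
  "amult n (BI n K1) (BI n K2) w =
   (of_nat (card {(u,v). (u \<in> Sn n \<and> Des n u \<subseteq> K1) \<and> (v \<in> Sn n \<and> Des n v \<subseteq> K2) \<and> u \<circ> v = w}) :: 'k::comm_ring_1)"
proof -
  define P where "P = (\<lambda>x::(nat\<Rightarrow>nat)\<times>(nat\<Rightarrow>nat). Des n (fst x) \<subseteq> K1 \<and> Des n (snd x) \<subseteq> K2 \<and> fst x \<circ> snd x = w)"
  have "amult n (BI n K1) (BI n K2) w = (\<Sum>u\<in>Sn n. \<Sum>v\<in>Sn n. if P (u,v) then (1::'k) else 0)"
    unfolding amult_def BI_def P_def by (intro sum.cong refl) auto
  also have "\<dots> = (\<Sum>x\<in>Sn n \<times> Sn n. if P x then (1::'k) else 0)"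
    by (subst sum.cartesian_product) (simp add: case_prod_beta)
  also have "\<dots> = of_nat (card {x\<in>Sn n \<times> Sn n. P x})"
    by (rule count_sum) (simp add: Sn_finite)
  also have "{x\<in>Sn n \<times> Sn n. P x} = {(u,v). (u \<in> Sn n \<and> Des n u \<subseteq> K1) \<and> (v \<in> Sn n \<and> Des n v \<subseteq> K2) \<and> u \<circ> v = w}"
    unfolding P_def by auto
  finally show ?thesis .
qed

lemma mono_contig:
  fixes c :: "nat \<Rightarrow> nat"
  assumes "mono c" "i \<le> l" "l \<le> j" "c i = c j"
  shows "c l = c i"
proof -
  have "c i \<le> c l" "c l \<le> c j" using monoD[OF assms(1) assms(2)] monoD[OF assms(1) assms(3)] by auto
  then show ?thesis using assms(4) by simp
qed

theorem theorem2p8: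
  fixes n :: nat and \<alpha> \<beta> :: "nat list" and a :: "(nat \<Rightarrow> nat) \<Rightarrow> 'k::comm_ring_1"
  assumes "is_comp n \<alpha>" and "is_comp n \<beta>" and "alg_elem n a"
  shows "\<exists>c :: nat list \<Rightarrow> (nat \<Rightarrow> nat) \<Rightarrow> 'k.
           (\<forall>\<gamma>. alg_elem n (c \<gamma>)) \<and>
           (\<lambda>w. amult n (Bc n \<alpha>) (amult n (Bc n \<beta>) a) w
                 - of_nat (eta \<beta> \<alpha>) * amult n (Bc n \<beta>) a w)
           = (\<lambda>w. \<Sum>\<gamma>\<in>{\<gamma>. is_comp n \<gamma> \<and> strictly_refines \<gamma> \<beta>}. amult n (Bc n \<gamma>) (c \<gamma>) w)"
proof -
  note ca = assms(1) and cb = assms(2) and al = assms(3)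
  define m where "m = length \<alpha>"
  define I where "I = comp_set \<alpha>"
  define J where "J = comp_set \<beta>"
  define fa where "fa = blk I"
  define fb where "fb = blk J"
  have fI: "finite I" and fJ: "finite J" unfolding I_def J_def by (simp_all add: cs_finite)
  have sI: "I \<subseteq> {1..<n}" unfolding I_def by (rule cs_sub[OF ca])
  have sJ: "J \<subseteq> {1..<n}" unfolding J_def by (rule cs_sub[OF cb])
  have fam: "mono fa" unfolding fa_def by (rule blk_mono[OF fI])
  have fbm: "mono fb" unfolding fb_def by (rule blk_mono[OF fJ])
  have far: "\<forall>x\<in>{1..n}. fa x < m" unfolding fa_def I_def m_def using blk_range[OF ca] by simp
  define G where "G = {g \<in> {1..n} \<rightarrow>\<^sub>E {0..<m}. (\<forall>k. card {x\<in>{1..n}. g x = k} = card {x\<in>{1..n}. fa x = k}) \<and>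
                 (\<forall>i j. 1 \<le> i \<longrightarrow> i < j \<longrightarrow> j \<le> n \<longrightarrow> fb i = fb j \<longrightarrow> g i \<le> g j)}"
  define Ig where "Ig = (\<lambda>g::nat\<Rightarrow>nat. {i\<in>{1..<n}. (fb i, g i) \<noteq> (fb (Suc i), g (Suc i))})"
  have finG: "finite G"
  proof -
    have "G \<subseteq> {1..n} \<rightarrow>\<^sub>E {0..<m}" unfolding G_def by blast
    moreover have "finite ({1..n} \<rightarrow>\<^sub>E {0..<m})" by (rule finite_PiE) auto
    ultimately show ?thesis by (rule finite_subset)
  qed
  have XA: "(u \<in> Sn n \<and> Des n u \<subseteq> I) \<longleftrightarrow> u \<in> Xm n fa" for u
  proof (cases "u \<in> Sn n")
    case True
    have ct: "fa l = fa i" if "1 \<le> i" "i \<le> l" "l \<le> j" "j \<le> n" "fa i = fa j" for i l j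
      using mono_contig[OF fam that(2,3,5)] .
    have d: "Des n u \<subseteq> {i\<in>{1..<n}. fa i \<noteq> fa (Suc i)} \<longleftrightarrow>
         (\<forall>i j. 1 \<le> i \<longrightarrow> i < j \<longrightarrow> j \<le> n \<longrightarrow> fa i = fa j \<longrightarrow> u i < u j)"
      using des_sub_iff[OF True ct] .
    have e: "{i\<in>{1..<n}. fa i \<noteq> fa (Suc i)} = I" unfolding fa_def by (rule cut_blk[OF fI sI])
    show ?thesis using d True unfolding e Xm_def mem_Collect_eq by blast
  next
    case False then show ?thesis unfolding Xm_def by blast
  qed
  have XB: "(u \<in> Sn n \<and> Des n u \<subseteq> J) \<longleftrightarrow> u \<in> Xm n fb" for u
  proof (cases "u \<in> Sn n")
    case True
    have ct: "fb l = fb i" if "1 \<le> i" "i \<le> l" "l \<le> j" "j \<le> n" "fb i = fb j" for i l j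
      using mono_contig[OF fbm that(2,3,5)] .
    have d: "Des n u \<subseteq> {i\<in>{1..<n}. fb i \<noteq> fb (Suc i)} \<longleftrightarrow>
         (\<forall>i j. 1 \<le> i \<longrightarrow> i < j \<longrightarrow> j \<le> n \<longrightarrow> fb i = fb j \<longrightarrow> u i < u j)"
      using des_sub_iff[OF True ct] .
    have e: "{i\<in>{1..<n}. fb i \<noteq> fb (Suc i)} = J" unfolding fb_def by (rule cut_blk[OF fJ sJ])
    show ?thesis using d True unfolding e Xm_def mem_Collect_eq by blast
  next
    case False then show ?thesis unfolding Xm_def by blast
  qed
  have XG: "(w \<in> Sn n \<and> Des n w \<subseteq> Ig g) \<longleftrightarrow> w \<in> Xm n (\<lambda>x. (fb x, g x))" if gG: "g \<in> G" for g w
  proof (cases "w \<in> Sn n")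
    case True
    have gm: "\<And>i j. 1 \<le> i \<Longrightarrow> i < j \<Longrightarrow> j \<le> n \<Longrightarrow> fb i = fb j \<Longrightarrow> g i \<le> g j"
      using gG unfolding G_def by blast
    have ct: "(fb l, g l) = (fb i, g i)"
      if h: "1 \<le> i" "i \<le> l" "l \<le> j" "j \<le> n" "(fb i, g i) = (fb j, g j)" for i l j
    proof -
      have e1: "fb i = fb j" "g i = g j" using h(5) by auto
      have b1: "fb l = fb i" using mono_contig[OF fbm h(2,3) e1(1)] .
      have b2: "fb l = fb j" using b1 e1 by simp
      have "g i \<le> g l"
      proof (cases "i = l")
        case False then show ?thesis using gm[of i l] h b1 by simp
      qed simp
      moreover have "g l \<le> g j"
      proof (cases "l = j")
        case False then show ?thesis using gm[of l j] h b2 by simp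
      qed simp
      ultimately show ?thesis using e1 b1 by simp
    qed
    have d: "Des n w \<subseteq> {i\<in>{1..<n}. (fb i, g i) \<noteq> (fb (Suc i), g (Suc i))} \<longleftrightarrow>
         (\<forall>i j. 1 \<le> i \<longrightarrow> i < j \<longrightarrow> j \<le> n \<longrightarrow> (fb i, g i) = (fb j, g j) \<longrightarrow> w i < w j)"
      using des_sub_iff[OF True ct] .
    show ?thesis using d True unfolding Ig_def Xm_def mem_Collect_eq by blast
  next
    case False then show ?thesis unfolding Xm_def by blast
  qed
  have prod: "amult n (Bc n \<alpha>) (Bc n \<beta>) = (\<lambda>w. \<Sum>g\<in>G. (BI n (Ig g) w :: 'k))"
  proof
    fix w
    have "amult n (Bc n \<alpha>) (Bc n \<beta>) w =
      (of_nat (card {(u,v). (u \<in> Sn n \<and> Des n u \<subseteq> I) \<and> (v \<in> Sn n \<and> Des n v \<subseteq> J) \<and> u \<circ> v = w}) :: 'k)"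
      unfolding Bc_def I_def J_def by (rule amult_BI)
    also have "{(u,v). (u \<in> Sn n \<and> Des n u \<subseteq> I) \<and> (v \<in> Sn n \<and> Des n v \<subseteq> J) \<and> u \<circ> v = w} =
       {(u,v). u \<in> Xm n fa \<and> v \<in> Xm n fb \<and> u \<circ> v = w}"
      using XA XB by blast
    also have "card \<dots> = card {g\<in>G. w \<in> Xm n (\<lambda>x. (fb x, g x))}"
      unfolding G_def by (rule key_bij[OF fam fbm far])
    also have "{g\<in>G. w \<in> Xm n (\<lambda>x. (fb x, g x))} = {g\<in>G. w \<in> Sn n \<and> Des n w \<subseteq> Ig g}"
      using XG by blast
    also have "(of_nat (card \<dots>) :: 'k) = (\<Sum>g\<in>G. if w \<in> Sn n \<and> Des n w \<subseteq> Ig g then 1 else 0)"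
      by (rule count_sum[symmetric, OF finG])
    also have "\<dots> = (\<Sum>g\<in>G. BI n (Ig g) w)" unfolding BI_def by simp
    finally show "amult n (Bc n \<alpha>) (Bc n \<beta>) w = (\<Sum>g\<in>G. (BI n (Ig g) w :: 'k))" .
  qed
  have cutJ: "{i\<in>{1..<n}. fb i \<noteq> fb (Suc i)} = J" unfolding fb_def by (rule cut_blk[OF fJ sJ])
  have JIg: "J \<subseteq> Ig g" for g using cutJ unfolding Ig_def by auto
  have Igsub: "Ig g \<subseteq> {1..<n}" "finite (Ig g)" for g unfolding Ig_def by auto
  have IgJ: "Ig g = J \<longleftrightarrow> (\<forall>i\<in>{1..<n}. fb i = fb (Suc i) \<longrightarrow> g i = g (Suc i))" for g
  proof
    assume e: "Ig g = J"
    show "\<forall>i\<in>{1..<n}. fb i = fb (Suc i) \<longrightarrow> g i = g (Suc i)"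
    proof (intro ballI impI)
      fix i assume i: "i \<in> {1..<n}" "fb i = fb (Suc i)"
      show "g i = g (Suc i)"
      proof (rule ccontr)
        assume "g i \<noteq> g (Suc i)"
        then have "i \<in> Ig g" using i unfolding Ig_def by auto
        then have "i \<in> J" using e by simp
        then show False using cutJ i by auto
      qed
    qed
  next
    assume h: "\<forall>i\<in>{1..<n}. fb i = fb (Suc i) \<longrightarrow> g i = g (Suc i)"
    have "Ig g \<subseteq> J"
    proof
      fix i assume "i \<in> Ig g"
      then have i: "i \<in> {1..<n}" "(fb i, g i) \<noteq> (fb (Suc i), g (Suc i))" unfolding Ig_def by auto
      then have "fb i \<noteq> fb (Suc i)" using h by auto
      then show "i \<in> J" using cutJ i by auto
    qed
    then show "Ig g = J" using JIg[of g] by blast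
  qed
  define G0 where "G0 = {g\<in>G. Ig g = J}"
  define G1 where "G1 = {g\<in>G. Ig g \<noteq> J}"
  have cardG0: "card G0 = eta \<beta> \<alpha>"
  proof -
    have "G0 = {g \<in> {1..n} \<rightarrow>\<^sub>E {0..<length \<alpha>}.
             (\<forall>k. card {x\<in>{1..n}. g x = k} = card {x\<in>{1..n}. blk (comp_set \<alpha>) x = k}) \<and>
             (\<forall>i j. 1 \<le> i \<longrightarrow> i < j \<longrightarrow> j \<le> n \<longrightarrow> blk (comp_set \<beta>) i = blk (comp_set \<beta>) j \<longrightarrow> g i \<le> g j) \<and>
             (\<forall>i\<in>{1..<n}. blk (comp_set \<beta>) i = blk (comp_set \<beta>) (Suc i) \<longrightarrow> g i = g (Suc i))}"
    proof -
      have "G0 = {g\<in>G. \<forall>i\<in>{1..<n}. fb i = fb (Suc i) \<longrightarrow> g i = g (Suc i)}"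
        unfolding G0_def using IgJ by blast
      then show ?thesis unfolding G_def m_def fa_def fb_def I_def J_def by auto
    qed
    then show ?thesis using eta_card[OF ca cb] by simp
  qed
  define cof where "cof = (\<lambda>g. SOME \<gamma>. is_comp n \<gamma> \<and> comp_set \<gamma> = Ig g)"
  have cof: "is_comp n (cof g) \<and> comp_set (cof g) = Ig g" for g
  proof -
    have "\<exists>\<gamma>. is_comp n \<gamma> \<and> comp_set \<gamma> = Ig g" using comp_exists[OF Igsub(2)] Igsub(1) by blast
    then show ?thesis unfolding cof_def by (rule someI_ex)
  qed
  define S where "S = {\<gamma>. is_comp n \<gamma> \<and> strictly_refines \<gamma> \<beta>}"
  have finS: "finite S" unfolding S_def using comps_finite[of n] by (rule finite_subset[rotated]) auto
  have cofS: "cof g \<in> S" if "g \<in> G1" for g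
  proof -
    have ne: "Ig g \<noteq> J" using that G1_def by simp
    have "refines (cof g) \<beta>"
      using refines_of_subset[of n "cof g" \<beta>] cof[of g] cb JIg[of g] J_def by simp
    moreover have "cof g \<noteq> \<beta>" using cof[of g] ne J_def by auto
    ultimately show ?thesis unfolding S_def strictly_refines_def using cof[of g] by simp
  qed
  have finG1: "finite G1" using finG G1_def by simp
  have finG0: "finite G0" using finG G0_def by simp
  define c where "c = (\<lambda>\<gamma> w. (of_nat (card {g\<in>G1. cof g = \<gamma>}) :: 'k) * a w)"
  have calg: "\<forall>\<gamma>. alg_elem n (c \<gamma>)" using al unfolding alg_elem_def c_def by simp
  have main: "amult n (Bc n \<alpha>) (amult n (Bc n \<beta>) a) w - of_nat (eta \<beta> \<alpha>) * amult n (Bc n \<beta>) a w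
        = (\<Sum>\<gamma>\<in>S. amult n (Bc n \<gamma>) (c \<gamma>) w)" for w
  proof -
    have "amult n (Bc n \<alpha>) (amult n (Bc n \<beta>) a) w = amult n (amult n (Bc n \<alpha>) (Bc n \<beta>)) a w"
      by (simp add: amult_assoc)
    also have "\<dots> = (\<Sum>g\<in>G. amult n (BI n (Ig g)) a w)"
      unfolding prod by (rule amult_sum_left[OF finG])
    also have "\<dots> = (\<Sum>g\<in>G0. amult n (BI n (Ig g)) a w) + (\<Sum>g\<in>G1. amult n (BI n (Ig g)) a w)"
    proof -
      have "G = G0 \<union> G1" "G0 \<inter> G1 = {}" unfolding G0_def G1_def by auto
      then show ?thesis using sum.union_disjoint[OF finG0 finG1] by simp
    qed
    also have "(\<Sum>g\<in>G0. amult n (BI n (Ig g)) a w) = of_nat (eta \<beta> \<alpha>) * amult n (Bc n \<beta>) a w"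
    proof -
      have "(\<Sum>g\<in>G0. amult n (BI n (Ig g)) a w) = (\<Sum>g\<in>G0. amult n (Bc n \<beta>) a w)"
        by (rule sum.cong) (auto simp: G0_def Bc_def J_def)
      also have "\<dots> = of_nat (card G0) * amult n (Bc n \<beta>) a w" by simp
      finally show ?thesis using cardG0 by simp
    qed
    finally have L: "amult n (Bc n \<alpha>) (amult n (Bc n \<beta>) a) w - of_nat (eta \<beta> \<alpha>) * amult n (Bc n \<beta>) a w
        = (\<Sum>g\<in>G1. amult n (BI n (Ig g)) a w)" by simp
    have "(\<Sum>\<gamma>\<in>S. amult n (Bc n \<gamma>) (c \<gamma>) w)
        = (\<Sum>\<gamma>\<in>S. of_nat (card {g\<in>G1. cof g = \<gamma>}) * amult n (Bc n \<gamma>) a w)"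
      unfolding c_def by (simp add: amult_scal_right)
    also have "\<dots> = (\<Sum>\<gamma>\<in>S. \<Sum>g\<in>{g\<in>G1. cof g = \<gamma>}. amult n (Bc n \<gamma>) a w)"
      by simp
    also have "\<dots> = (\<Sum>\<gamma>\<in>S. \<Sum>g\<in>{g\<in>G1. cof g = \<gamma>}. amult n (BI n (Ig g)) a w)"
    proof (intro sum.cong refl)
      fix \<gamma> g assume "g \<in> {g\<in>G1. cof g = \<gamma>}"
      then have "comp_set \<gamma> = Ig g" using cof[of g] by auto
      then show "amult n (Bc n \<gamma>) a w = amult n (BI n (Ig g)) a w" unfolding Bc_def by simp
    qed
    also have "\<dots> = (\<Sum>g\<in>G1. amult n (BI n (Ig g)) a w)"
      by (rule sum.group[OF finG1 finS]) (use cofS in blast)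
    finally show ?thesis using L by simp
  qed
  show ?thesis
    by (intro exI[of _ c] conjI calg ext) (simp add: main S_def)
qed

end
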